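(* Let $N\ge 0$ and let $\mathcal P\subseteq \Pi=\mathbb C[x_1,\dots,x_s]$ be a degree reducing universal interpolation space of order $N+1$ which is non-redundant, i.e. no proper subspace $\mathcal Q\subsetneq\mathcal P$ is also a degree reducing universal interpolation space of order $N+1$. Then $\mathcal P\subseteq \Pi_N$.
   Context: $\Pi=\mathbb C[x_1,\dots,x_s]$; $\deg p$ denotes total degree, with the convention $\deg 0<0$; $\Pi_N$ is the space of polynomials of total degree at most $N$. A linear subspace $\mathcal P\subseteq\Pi$ is a degree reducing universal interpolation space of order $M$ if for every finite set $X\subset\mathbb C^s$ with $\#X\le M$ and every $q\in\Pi$ there exists $p\in\mathcal P$ with $p(x)=q(x)$ for all $x\in X$ and $\deg p\le\deg q$. *)

theory Defs
  imports Complex_Main "HOL-Library.Poly_Mapping"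
begin

text \<open>Polynomials in s variables over the complex numbers, where the variables are
  indexed by a finite type 'n (so s = CARD('n)).\<close>

type_synonym 'n mpoly = "('n \<Rightarrow>\<^sub>0 nat) \<Rightarrow>\<^sub>0 complex"

definition mono_deg :: "('n \<Rightarrow>\<^sub>0 nat) \<Rightarrow> nat" where
  "mono_deg m = (\<Sum>i\<in>Poly_Mapping.keys m. Poly_Mapping.lookup m i)"

definition mdeg :: "'n mpoly \<Rightarrow> int" where
  "mdeg p = (if p = 0 then -1 else int (Max (mono_deg ` Poly_Mapping.keys p)))"

definition meval :: "'n mpoly \<Rightarrow> ('n \<Rightarrow> complex) \<Rightarrow> complex" where
  "meval p x = (\<Sum>m\<in>Poly_Mapping.keys p. Poly_Mapping.lookup p m * (\<Prod>i\<in>Poly_Mapping.keys m. x i ^ Poly_Mapping.lookup m i))"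

definition cscale :: "complex \<Rightarrow> 'n mpoly \<Rightarrow> 'n mpoly" where
  "cscale c p = Poly_Mapping.map (\<lambda>a. c * a) p"

definition is_subspace :: "'n mpoly set \<Rightarrow> bool" where
  "is_subspace P \<longleftrightarrow> 0 \<in> P \<and> (\<forall>p\<in>P. \<forall>q\<in>P. p + q \<in> P) \<and> (\<forall>c. \<forall>p\<in>P. cscale c p \<in> P)"

definition Pi_deg :: "nat \<Rightarrow> 'n mpoly set" where
  "Pi_deg N = {p. mdeg p \<le> int N}"

definition dr_universal_interp :: "nat \<Rightarrow> 'n mpoly set \<Rightarrow> bool" where
  "dr_universal_interp M P \<longleftrightarrow> is_subspace P \<and>
     (\<forall>X :: ('n \<Rightarrow> complex) set. \<forall>q. finite X \<and> card X \<le> M \<longrightarrow>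
        (\<exists>p\<in>P. (\<forall>x\<in>X. meval p x = meval q x) \<and> mdeg p \<le> mdeg q))"

end

theory Submission
  imports Defs
begin

definition mono :: "('n \<Rightarrow>\<^sub>0 nat) \<Rightarrow> ('n \<Rightarrow> complex) \<Rightarrow> complex" where
  "mono m x = (\<Prod>i\<in>Poly_Mapping.keys m. x i ^ Poly_Mapping.lookup m i)"

lemma mono_UNIV: "mono (m :: 'n::finite \<Rightarrow>\<^sub>0 nat) x = (\<Prod>i\<in>UNIV. x i ^ Poly_Mapping.lookup m i)"
  unfolding mono_def
  by (rule prod.mono_neutral_left) (auto simp: in_keys_iff)

lemma mono_add: "mono ((a :: 'n::finite \<Rightarrow>\<^sub>0 nat) + b) x = mono a x * mono b x"
  by (simp add: mono_UNIV lookup_add power_add prod.distrib)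

lemma mono_zero: "mono 0 x = 1"
  by (simp add: mono_def)

lemma mono_var: "mono (Poly_Mapping.single i 1) x = x i"
  by (simp add: mono_def)

lemma mono_var': "mono (Poly_Mapping.single i (Suc 0)) x = x i"
  by (simp add: mono_def)

lemma meval_mono: "meval p x = (\<Sum>m\<in>Poly_Mapping.keys p. Poly_Mapping.lookup p m * mono m x)"
  by (simp add: meval_def mono_def)

lemma meval_superset:
  assumes "finite S" "Poly_Mapping.keys p \<subseteq> S"
  shows "meval p x = (\<Sum>m\<in>S. Poly_Mapping.lookup p m * mono m x)"
  unfolding meval_mono
  by (rule sum.mono_neutral_left) (use assms in \<open>auto simp: in_keys_iff\<close>)

lemma meval_add: "meval (p + q) x = meval p x + meval q x"
proof -
  let ?S = "Poly_Mapping.keys p \<union> Poly_Mapping.keys q"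
  have "meval (p+q) x = (\<Sum>m\<in>?S. Poly_Mapping.lookup (p+q) m * mono m x)"
    by (rule meval_superset) (auto dest: keys_add[THEN subsetD])
  also have "\<dots> = (\<Sum>m\<in>?S. Poly_Mapping.lookup p m * mono m x) + (\<Sum>m\<in>?S. Poly_Mapping.lookup q m * mono m x)"
    by (simp add: lookup_add distrib_right sum.distrib)
  also have "\<dots> = meval p x + meval q x"
    by (simp add: meval_superset[symmetric])
  finally show ?thesis .
qed

lemma meval_zero: "meval 0 x = 0"
  by (simp add: meval_def)

lemma meval_single: "meval (Poly_Mapping.single m c) x = c * mono m x"
  by (simp add: meval_mono)

lemma meval_one: "meval 1 x = 1"
  by (simp add: meval_mono mono_zero)

lemma lookup_mult_fin:
  "Poly_Mapping.lookup (p * q) k =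
    (\<Sum>(a,b)\<in>Poly_Mapping.keys p \<times> Poly_Mapping.keys q.
        Poly_Mapping.lookup p a * Poly_Mapping.lookup q b when k = a + b)"
proof -
  have "Poly_Mapping.lookup (p * q) k = prod_fun (Poly_Mapping.lookup p) (Poly_Mapping.lookup q) k"
    by transfer simp
  also have "\<dots> = (\<Sum>(a, b). Poly_Mapping.lookup p a * Poly_Mapping.lookup q b when k = a + b)"
    by (rule prod_fun_unfold_prod) auto
  also have "\<dots> = (\<Sum>(a,b)\<in>Poly_Mapping.keys p \<times> Poly_Mapping.keys q.
        Poly_Mapping.lookup p a * Poly_Mapping.lookup q b when k = a + b)"
    by (rule Sum_any.expand_superset) (auto simp: in_keys_iff)
  finally show ?thesis .
qed

lemma meval_mult: "meval (p * (q :: 'n::finite mpoly)) x = meval p x * meval q x"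
proof -
  let ?A = "Poly_Mapping.keys p \<times> Poly_Mapping.keys q"
  let ?K = "(\<lambda>(a,b). a + b) ` ?A"
  have fK: "finite ?K" by simp
  have kK: "Poly_Mapping.keys (p*q) \<subseteq> ?K"
    using keys_mult[of p q] by auto
  have "meval (p*q) x = (\<Sum>k\<in>?K. Poly_Mapping.lookup (p*q) k * mono k x)"
    by (rule meval_superset[OF fK kK])
  also have "\<dots> = (\<Sum>k\<in>?K. \<Sum>(a,b)\<in>?A. (Poly_Mapping.lookup p a * Poly_Mapping.lookup q b * mono k x when k = a + b))"
    by (simp add: lookup_mult_fin sum_distrib_right case_prod_unfold when_mult)
  also have "\<dots> = (\<Sum>(a,b)\<in>?A. \<Sum>k\<in>?K. (Poly_Mapping.lookup p a * Poly_Mapping.lookup q b * mono k x when k = a + b))"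
    unfolding case_prod_unfold by (rule sum.swap)
  also have "\<dots> = (\<Sum>(a,b)\<in>?A. Poly_Mapping.lookup p a * Poly_Mapping.lookup q b * mono (a+b) x)"
  proof (rule sum.cong[OF refl])
    fix ab assume ab: "ab \<in> ?A"
    obtain a b where [simp]: "ab = (a,b)" by (cases ab)
    have "a + b \<in> ?K" using ab by force
    then show "(case ab of (a,b) \<Rightarrow> \<Sum>k\<in>?K. (Poly_Mapping.lookup p a * Poly_Mapping.lookup q b * mono k x when k = a + b))
      = (case ab of (a,b) \<Rightarrow> Poly_Mapping.lookup p a * Poly_Mapping.lookup q b * mono (a+b) x)"
      by (simp add: when_def sum.delta')
  qed
  also have "\<dots> = (\<Sum>(a,b)\<in>?A. (Poly_Mapping.lookup p a * mono a x) * (Poly_Mapping.lookup q b * mono b x))"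
    by (simp add: mono_add mult_ac)
  also have "\<dots> = meval p x * meval q x"
    by (simp add: meval_mono sum_product sum.cartesian_product)
  finally show ?thesis .
qed

lemma meval_prod: "finite S \<Longrightarrow> meval (\<Prod>z\<in>S. F z :: 'n::finite mpoly) x = (\<Prod>z\<in>S. meval (F z) x)"
  by (induction S rule: finite_induct) (auto simp: meval_one meval_mult)

lemma meval_sum: "finite S \<Longrightarrow> meval (\<Sum>z\<in>S. F z :: 'n::finite mpoly) x = (\<Sum>z\<in>S. meval (F z) x)"
  by (induction S rule: finite_induct) (auto simp: meval_zero meval_add)

definition deg_le :: "nat \<Rightarrow> 'n mpoly \<Rightarrow> bool" where
  "deg_le k p \<longleftrightarrow> (\<forall>m\<in>Poly_Mapping.keys p. mono_deg m \<le> k)"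

lemma mdeg_le_iff: "mdeg p \<le> int k \<longleftrightarrow> deg_le k p"
proof (cases "p = 0")
  case True then show ?thesis by (simp add: mdeg_def deg_le_def)
next
  case False
  then have "Poly_Mapping.keys p \<noteq> {}" by simp
  then show ?thesis using False by (simp add: mdeg_def deg_le_def Max_le_iff)
qed

lemma mono_deg_UNIV: "mono_deg (m :: 'n::finite \<Rightarrow>\<^sub>0 nat) = (\<Sum>i\<in>UNIV. Poly_Mapping.lookup m i)"
  unfolding mono_deg_def
  by (rule sum.mono_neutral_left) (auto simp: in_keys_iff)

lemma mono_deg_add: "mono_deg ((a :: 'n::finite \<Rightarrow>\<^sub>0 nat) + b) = mono_deg a + mono_deg b"
  by (simp add: mono_deg_UNIV lookup_add sum.distrib)

lemma deg_le_mono: "deg_le a p \<Longrightarrow> a \<le> b \<Longrightarrow> deg_le b p"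
  by (auto simp: deg_le_def)

lemma deg_le_zero: "deg_le k 0"
  by (simp add: deg_le_def)

lemma deg_le_add: "deg_le k p \<Longrightarrow> deg_le k q \<Longrightarrow> deg_le k (p + q)"
  unfolding deg_le_def using keys_add[of p q] by blast

lemma deg_le_mult: "deg_le a p \<Longrightarrow> deg_le b (q :: 'n::finite mpoly) \<Longrightarrow> deg_le (a + b) (p * q)"
  unfolding deg_le_def using keys_mult[of p q]
  by (force simp: mono_deg_add intro: add_mono)

lemma deg_le_const: "deg_le 0 (Poly_Mapping.single 0 c)"
  by (simp add: deg_le_def mono_deg_def)

lemma deg_le_one: "deg_le 0 (1 :: 'n mpoly)"
  by (simp add: deg_le_def mono_deg_def)

lemma deg_le_var: "deg_le 1 (Poly_Mapping.single (Poly_Mapping.single i 1) (c::complex))"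
  by (simp add: deg_le_def mono_deg_def)

lemma deg_le_sum: "finite S \<Longrightarrow> (\<And>z. z \<in> S \<Longrightarrow> deg_le k (F z)) \<Longrightarrow> deg_le k (\<Sum>z\<in>S. F z :: 'n mpoly)"
  by (induction S rule: finite_induct) (auto simp: deg_le_zero deg_le_add)

lemma deg_le_prod: "finite S \<Longrightarrow> (\<And>z. z \<in> S \<Longrightarrow> deg_le 1 (F z)) \<Longrightarrow> deg_le (card S) (\<Prod>z\<in>S. F z :: 'n::finite mpoly)"
proof (induction S rule: finite_induct)
  case empty then show ?case by (simp add: deg_le_one)
next
  case (insert a S)
  then show ?case using deg_le_mult[of 1 "F a" "card S" "\<Prod>z\<in>S. F z"] by simp
qed

definition lin :: "('n \<Rightarrow> complex) \<Rightarrow> ('n \<Rightarrow> complex) \<Rightarrow> 'n mpoly" where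
  "lin y z = (let i = (SOME i. y i \<noteq> z i) in
     Poly_Mapping.single 0 (1 / (y i - z i)) *
       (Poly_Mapping.single (Poly_Mapping.single i 1) 1 + Poly_Mapping.single 0 (- z i)))"

lemma lin_props:
  assumes "y \<noteq> (z :: 'n::finite \<Rightarrow> complex)"
  shows "meval (lin y z) y = 1" "meval (lin y z) z = 0" "deg_le 1 (lin y z)"
proof -
  obtain i where i: "i = (SOME i. y i \<noteq> z i)" by simp
  have "\<exists>i. y i \<noteq> z i" using assms by auto
  then have ne: "y i \<noteq> z i" unfolding i by (rule someI_ex)
  have ev: "meval (lin y z) w = (1 / (y i - z i)) * (w i - z i)" for w
    by (simp add: lin_def i[symmetric] Let_def meval_mult meval_add meval_single mono_zero mono_var mono_var')
  show "meval (lin y z) y = 1" using ne by (simp add: ev)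
  show "meval (lin y z) z = 0" by (simp add: ev)
  show "deg_le 1 (lin y z)"
    unfolding lin_def Let_def
    using deg_le_mult[OF deg_le_const deg_le_add[OF deg_le_var deg_le_mono[OF deg_le_const]]]
    by simp
qed

lemma interp:
  fixes X :: "('n::finite \<Rightarrow> complex) set"
  assumes "finite X" "card X \<le> N + 1"
  shows "\<exists>r. deg_le N r \<and> (\<forall>x\<in>X. meval r x = f x)"
proof -
  define L where "L y = (\<Prod>z\<in>X - {y}. lin y z)" for y
  define r where "r = (\<Sum>y\<in>X. Poly_Mapping.single 0 (f y) * L y)"
  have Ly: "meval (L y) w = (if w = y then 1 else 0)" if "y \<in> X" "w \<in> X" for y w
  proof (cases "w = y")
    case True
    have "meval (L y) y = (\<Prod>z\<in>X - {y}. meval (lin y z) y)"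
      using assms(1) by (simp add: L_def meval_prod)
    also have "\<dots> = 1"
      by (rule prod.neutral) (metis DiffE insertI1 lin_props(1))
    finally show ?thesis using True by simp
  next
    case False
    have "meval (L y) w = (\<Prod>z\<in>X - {y}. meval (lin y z) w)"
      using assms(1) by (simp add: L_def meval_prod)
    also have "\<dots> = 0"
      using False that assms(1) by (intro prod_zero) (auto intro!: bexI[of _ w] lin_props)
    finally show ?thesis using False by simp
  qed
  have "meval r w = f w" if "w \<in> X" for w
  proof -
    have "meval r w = (\<Sum>y\<in>X. f y * meval (L y) w)"
      using assms(1) by (simp add: r_def meval_sum meval_mult meval_single mono_zero)
    also have "\<dots> = (\<Sum>y\<in>X. if y = w then f y else 0)"
      by (rule sum.cong) (auto simp: Ly that)
    also have "\<dots> = f w" using assms(1) that by (simp add: sum.delta)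
    finally show ?thesis .
  qed
  moreover have "deg_le N r"
    unfolding r_def
  proof (rule deg_le_sum[OF assms(1)])
    fix y assume y: "y \<in> X"
    have c: "card (X - {y}) \<le> N" using assms y by (simp add: card_Diff_singleton)
    have "deg_le (card (X - {y})) (L y)"
      unfolding L_def using assms(1) by (intro deg_le_prod; metis DiffE insertI1 lin_props(3) finite_Diff)
    then have "deg_le N (L y)" using c by (rule deg_le_mono)
    then show "deg_le N (Poly_Mapping.single 0 (f y) * L y)"
      using deg_le_mult[OF deg_le_const] by fastforce
  qed
  ultimately show ?thesis by blast
qed

theorem lemma14:
  fixes P :: "'n::finite mpoly set" and N :: nat
  assumes "dr_universal_interp (N + 1) P"
    and "\<forall>Q. Q \<subset> P \<longrightarrow> \<not> dr_universal_interp (N + 1) Q"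
  shows "P \<subseteq> Pi_deg N"
proof -
  define Q where "Q = P \<inter> {p. deg_le N p}"
  have sP: "is_subspace P" and uP: "\<And>X q. finite X \<Longrightarrow> card X \<le> N + 1 \<Longrightarrow>
        (\<exists>p\<in>P. (\<forall>x\<in>X. meval p x = meval q x) \<and> mdeg p \<le> mdeg q)"
    using assms(1) unfolding dr_universal_interp_def by blast+
  have sQ: "is_subspace Q"
    using sP unfolding is_subspace_def Q_def
  proof (intro conjI ballI allI)
    fix c p assume "0 \<in> P \<and> (\<forall>p\<in>P. \<forall>q\<in>P. p + q \<in> P) \<and> (\<forall>c. \<forall>p\<in>P. cscale c p \<in> P)"
      "p \<in> P \<inter> {p. deg_le N p}"
    then show "cscale c p \<in> P \<inter> {p. deg_le N p}"
      using deg_le_mult[OF deg_le_const, of N p c]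
      by (auto simp: cscale_def mult_map_scale_conv_mult)
  qed (auto simp: deg_le_zero deg_le_add)
  have "dr_universal_interp (N + 1) Q"
    unfolding dr_universal_interp_def
  proof (intro conjI sQ allI impI)
    fix X :: "('n \<Rightarrow> complex) set" and q
    assume X: "finite X \<and> card X \<le> N + 1"
    show "\<exists>p\<in>Q. (\<forall>x\<in>X. meval p x = meval q x) \<and> mdeg p \<le> mdeg q"
    proof (cases "mdeg q \<le> int N")
      case True
      obtain p where "p \<in> P" "\<forall>x\<in>X. meval p x = meval q x" "mdeg p \<le> mdeg q"
        using uP X by blast
      then show ?thesis using True by (auto simp: Q_def mdeg_le_iff[symmetric])
    next
      case False
      obtain r where r: "deg_le N r" "\<forall>x\<in>X. meval r x = meval q x"
        using interp[of X N "meval q"] X by blast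
      obtain p where "p \<in> P" "\<forall>x\<in>X. meval p x = meval r x" "mdeg p \<le> mdeg r"
        using uP X by blast
      moreover have "mdeg r \<le> int N" using r by (simp add: mdeg_le_iff)
      ultimately show ?thesis using False r
        by (auto simp: Q_def mdeg_le_iff[symmetric])
    qed
  qed
  then have "\<not> Q \<subset> P" using assms(2) by blast
  then have "Q = P" unfolding Q_def by blast
  then show ?thesis unfolding Q_def Pi_deg_def by (auto simp: mdeg_le_iff)
qed

end
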